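(* Let $G$ be a directed graph, and let $p\ge 2$ and $r\ge 1$ be integers. If $G$ is $p$-solvable, then the lexicographic product $(G,r)$ is $pr$-solvable.
   Context: All graphs are finite. A directed graph $D=(V,E)$ has arcs $E \subseteq \{(u,v)\in V^2 : u \neq v\}$; bidirectional pairs are allowed. An undirected graph is identified with the directed graph having both arcs $(u,v)$ and $(v,u)$ for each edge $\{u,v\}$. The in-neighbourhood of $v$ is $N^-(v)=\{u : (u,v)\in E\}$. For an integer $q\ge 2$ let $[q]=\{0,1,\dots,q-1\}$. A $D$-function over $[q]$ is a map $f=(f_v)_{v\in V}:[q]^V\to[q]^V$ such that each $f_v(x)$ depends only on $(x_u)_{u\in N^-(v)}$. The graph $D$ is $q$-solvable if there is a $D$-function $f$ over $[q]$ such that for every $x\in[q]^V$ there exists a vertex $v$ with $f_v(x)=x_v$. The lexicographic product $(D,r)$ of a directed graph $D=(V,E)$ with the clique $K_r$ is the directed graph with vertex set $V\times\{0,\dots,r-1\}$ in which $((u,a),(v,b))$ is an arc if and only if either $(u,v)\in E$, or $u=v$ and $a\ne b$. *)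

theory Defs
  imports Main "HOL-Library.FuncSet"
begin

definition digraph :: "'a set \<Rightarrow> ('a \<times> 'a) set \<Rightarrow> bool" where
  "digraph V E \<longleftrightarrow> finite V \<and> E \<subseteq> {(u, v). u \<in> V \<and> v \<in> V \<and> u \<noteq> v}"

definition in_nbhd :: "('a \<times> 'a) set \<Rightarrow> 'a \<Rightarrow> 'a set" where
  "in_nbhd E v = {u. (u, v) \<in> E}"

definition configs :: "'a set \<Rightarrow> nat \<Rightarrow> ('a \<Rightarrow> nat) set" where
  "configs V q = V \<rightarrow>\<^sub>E {..<q}"

definition is_dfunction :: "'a set \<Rightarrow> ('a \<times> 'a) set \<Rightarrow> nat \<Rightarrow> (('a \<Rightarrow> nat) \<Rightarrow> ('a \<Rightarrow> nat)) \<Rightarrow> bool" where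
  "is_dfunction V E q f \<longleftrightarrow>
     (\<forall>x \<in> configs V q. f x \<in> configs V q) \<and>
     (\<forall>v \<in> V. \<forall>x \<in> configs V q. \<forall>y \<in> configs V q.
        (\<forall>u \<in> in_nbhd E v. x u = y u) \<longrightarrow> f x v = f y v)"

definition solvable :: "'a set \<Rightarrow> ('a \<times> 'a) set \<Rightarrow> nat \<Rightarrow> bool" where
  "solvable V E q \<longleftrightarrow>
     (\<exists>f. is_dfunction V E q f \<and> (\<forall>x \<in> configs V q. \<exists>v \<in> V. f x v = x v))"

definition lex_vertices :: "'a set \<Rightarrow> nat \<Rightarrow> ('a \<times> nat) set" where
  "lex_vertices V r = V \<times> {..<r}"

definition lex_arcs :: "'a set \<Rightarrow> ('a \<times> 'a) set \<Rightarrow> nat \<Rightarrow> (('a \<times> nat) \<times> ('a \<times> nat)) set" where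
  "lex_arcs V E r = {((u, a), (v, b)). (u, a) \<in> V \<times> {..<r} \<and> (v, b) \<in> V \<times> {..<r} \<and>
       ((u, v) \<in> E \<or> (u = v \<and> a \<noteq> b))}"

end

theory Submission
  imports Defs
begin

lemma key_mod:
  fixes q S p :: nat
  assumes "q < p"
  shows "nat ((int ((q + S) mod p) - int S) mod int p) = q"
proof -
  have "(int ((q + S) mod p) - int S) mod int p = ((int q + int S) mod int p - int S) mod int p"
    by (simp add: zmod_int)
  also have "\<dots> = (int q + int S - int S) mod int p" by (simp add: mod_diff_left_eq)
  also have "\<dots> = int q" using assms by simp
  finally show ?thesis by simp
qed

theorem lemma2:
  fixes V :: "'a set" and E :: "('a \<times> 'a) set" and p r :: nat
  assumes "digraph V E" and "p \<ge> 2" and "r \<ge> 1"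
    and "solvable V E p"
  shows "solvable (lex_vertices V r) (lex_arcs V E r) (p * r)"
proof -
  obtain f where fd: "is_dfunction V E p f" and fs: "\<forall>x \<in> configs V p. \<exists>v \<in> V. f x v = x v"
    using assms(4) unfolding solvable_def by blast
  have p0: "p > 0" and r0: "r > 0" using assms by auto
  have EV: "\<And>u v. (u, v) \<in> E \<Longrightarrow> u \<in> V \<and> v \<in> V" using assms(1) unfolding digraph_def by auto
  define red where "red X = (\<lambda>v\<in>V. (\<Sum>b<r. X (v, b) div r) mod p)" for X :: "'a \<times> nat \<Rightarrow> nat"
  define S where "S X v a = (\<Sum>b\<in>{..<r} - {a}. X (v, b) div r)" for X :: "'a \<times> nat \<Rightarrow> nat" and v a
  define T where "T X v a = (\<Sum>b\<in>{..<r} - {a}. X (v, b) mod r)" for X :: "'a \<times> nat \<Rightarrow> nat" and v a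
  define F where "F X = (\<lambda>(v, a)\<in>V \<times> {..<r}.
      nat ((int (f (red X) v) - int (S X v a)) mod int p) * r + nat ((int a - int (T X v a)) mod int r))"
    for X :: "'a \<times> nat \<Rightarrow> nat"
  have redc: "red X \<in> configs V p" for X
    unfolding red_def configs_def using p0 by auto
  have fc: "f x \<in> configs V p" if "x \<in> configs V p" for x
    using fd that unfolding is_dfunction_def by blast
  have fv_lt: "f (red X) v < p" if "v \<in> V" for X v
    using fc[OF redc] that unfolding configs_def by auto
  have bound: "nat (i mod int p) * r + nat (j mod int r) < p * r" for i j
  proof -
    have "nat (i mod int p) \<le> p - 1" using p0 by (simp add: nat_le_iff) 
    hence "nat (i mod int p) * r \<le> (p - 1) * r" by simp
    moreover have "nat (j mod int r) < r" using r0 by (simp add: nat_less_iff)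
    ultimately have "nat (i mod int p) * r + nat (j mod int r) < (p - 1) * r + r" by linarith
    also have "\<dots> = p * r" using p0 by (simp add: algebra_simps)
    finally show ?thesis .
  qed
  have Fc: "F X \<in> configs (lex_vertices V r) (p * r)" for X
    unfolding configs_def lex_vertices_def F_def using bound by auto
  have nb: "(u, b) \<in> in_nbhd (lex_arcs V E r) (v, a)"
    if "v \<in> V" "a < r" "u \<in> V" "b < r" "(u, v) \<in> E \<or> (u = v \<and> a \<noteq> b)" for v a u b
    using that unfolding in_nbhd_def lex_arcs_def by auto
  have dep: "F X (v, a) = F Y (v, a)"
    if X: "X \<in> configs (lex_vertices V r) (p * r)" and Y: "Y \<in> configs (lex_vertices V r) (p * r)"
      and va: "(v, a) \<in> lex_vertices V r"
      and ag: "\<forall>w \<in> in_nbhd (lex_arcs V E r) (v, a). X w = Y w" for X Y v a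
  proof -
    have v: "v \<in> V" and a: "a < r" using va unfolding lex_vertices_def by auto
    have agE: "X (u, b) = Y (u, b)" if "(u, v) \<in> E" "b < r" for u b
    proof -
      have "u \<in> V" using EV that(1) by blast
      hence "(u, b) \<in> in_nbhd (lex_arcs V E r) (v, a)" using nb[OF v a] that by blast
      thus ?thesis using ag by blast
    qed
    have agS: "X (v, b) = Y (v, b)" if "b \<in> {..<r} - {a}" for b
    proof -
      have "(v, b) \<in> in_nbhd (lex_arcs V E r) (v, a)" using nb[OF v a v] that by blast
      thus ?thesis using ag by blast
    qed
    have "\<forall>u \<in> in_nbhd E v. red X u = red Y u"
    proof
      fix u assume "u \<in> in_nbhd E v"
      hence uv: "(u, v) \<in> E" unfolding in_nbhd_def by auto
      hence u: "u \<in> V" using EV by auto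
      have "(\<Sum>b<r. X (u, b) div r) = (\<Sum>b<r. Y (u, b) div r)"
        by (rule sum.cong) (simp_all add: agE[OF uv])
      thus "red X u = red Y u" unfolding red_def using u by simp
    qed
    hence "f (red X) v = f (red Y) v" using fd v redc unfolding is_dfunction_def by blast
    moreover have "S X v a = S Y v a" unfolding S_def by (rule sum.cong) (simp_all add: agS)
    moreover have "T X v a = T Y v a" unfolding T_def by (rule sum.cong) (simp_all add: agS)
    ultimately show ?thesis unfolding F_def using v a by simp
  qed
  have "is_dfunction (lex_vertices V r) (lex_arcs V E r) (p * r) F"
    unfolding is_dfunction_def
  proof (intro conjI ballI impI)
    fix X show "F X \<in> configs (lex_vertices V r) (p * r)" by (rule Fc)
  next
    fix w X Y assume w: "w \<in> lex_vertices V r" and X: "X \<in> configs (lex_vertices V r) (p * r)"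
      and Y: "Y \<in> configs (lex_vertices V r) (p * r)"
      and ag: "\<forall>u\<in>in_nbhd (lex_arcs V E r) w. X u = Y u"
    obtain v a where va: "w = (v, a)" by force
    show "F X w = F Y w" using dep[OF X Y] w ag unfolding va by blast
  qed
  moreover have "\<forall>X \<in> configs (lex_vertices V r) (p * r). \<exists>w \<in> lex_vertices V r. F X w = X w"
  proof
    fix X assume X: "X \<in> configs (lex_vertices V r) (p * r)"
    obtain v where v: "v \<in> V" and fix_v: "f (red X) v = red X v" using fs redc by blast
    define a0 where "a0 = (\<Sum>b<r. X (v, b) mod r) mod r"
    have a0: "a0 < r" unfolding a0_def using r0 by simp
    have Xlt: "X (v, a0) < p * r" using X v a0 unfolding configs_def lex_vertices_def by auto
    have q: "X (v, a0) div r < p" using Xlt by (simp add: less_mult_imp_div_less)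
    have s1: "(\<Sum>b<r. X (v, b) div r) = X (v, a0) div r + S X v a0"
      unfolding S_def using a0 by (simp add: sum.remove)
    have s2: "(\<Sum>b<r. X (v, b) mod r) = X (v, a0) mod r + T X v a0"
      unfolding T_def using a0 by (simp add: sum.remove)
    have "f (red X) v = (X (v, a0) div r + S X v a0) mod p"
      using fix_v v s1 unfolding red_def by simp
    hence d: "nat ((int (f (red X) v) - int (S X v a0)) mod int p) = X (v, a0) div r"
      using key_mod[OF q] by simp
    have "a0 = (X (v, a0) mod r + T X v a0) mod r" using s2 unfolding a0_def by simp
    hence t: "nat ((int a0 - int (T X v a0)) mod int r) = X (v, a0) mod r"
      using key_mod[of "X (v, a0) mod r" r "T X v a0"] r0 by simp
    have "F X (v, a0) = X (v, a0)"
      unfolding F_def using v a0 d t by simp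
    thus "\<exists>w \<in> lex_vertices V r. F X w = X w" using v a0 unfolding lex_vertices_def by blast
  qed
  ultimately show ?thesis unfolding solvable_def by blast
qed

end
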